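(* Let $n \in \mathbb{N}$ and let $f \colon I^n \to \mathbb{R}^{n-1}$ be continuous. Then there exist a point $p \in \mathbb{R}^{n-1}$ and a compact subset $S \subset f^{-1}[\{p\}]$ which connects some opposite faces of $I^n$.
   Context: $I^n = [0,1]^n$, $\mathbb{R}^0 = \{0\}$. For $i \in \{1,\dots,n\}$ let $I^n_{i,-} = \{z \in I^n : z_i = 0\}$ and $I^n_{i,+} = \{z \in I^n : z_i = 1\}$. A set $S \subset I^n$ connects some opposite faces of $I^n$ if $S$ is connected and there is $i$ with $S \cap I^n_{i,-} \ne \emptyset \ne S \cap I^n_{i,+}$. *)

theory Defs
  imports "HOL-Analysis.Analysis"
begin

text \<open>Points of R^n are modelled as functions nat => real vanishing at indices >= n
  (the library's Euclidean_space n); coordinates are indexed 0..n-1 instead of 1..n.\<close>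

definition unit_cube :: "nat \<Rightarrow> (nat \<Rightarrow> real) set" where
  "unit_cube n = {x. (\<forall>i<n. 0 \<le> x i \<and> x i \<le> 1) \<and> (\<forall>i\<ge>n. x i = 0)}"

definition cube_face_minus :: "nat \<Rightarrow> nat \<Rightarrow> (nat \<Rightarrow> real) set" where
  "cube_face_minus n i = {z \<in> unit_cube n. z i = 0}"

definition cube_face_plus :: "nat \<Rightarrow> nat \<Rightarrow> (nat \<Rightarrow> real) set" where
  "cube_face_plus n i = {z \<in> unit_cube n. z i = 1}"

definition connects_opposite_faces :: "nat \<Rightarrow> (nat \<Rightarrow> real) set \<Rightarrow> bool" where
  "connects_opposite_faces n S \<longleftrightarrow>
     connectedin (Euclidean_space n) S \<and>
     (\<exists>i<n. S \<inter> cube_face_minus n i \<noteq> {} \<and> S \<inter> cube_face_plus n i \<noteq> {})"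

end

theory Submission
  imports Defs "HOL-Homology.Homology"
begin

lemma eq1: "x \<in> unit_cube n \<longleftrightarrow> x \<in> PiE UNIV (\<lambda>i. if i<n then {0..1} else {0::real})"
      unfolding PiE_iff extensional_UNIV unit_cube_def mem_Collect_eq
      by (metis atLeastAtMost_iff insert_iff empty_iff not_le UNIV_I)
lemma compact_unit_cube: "compact (unit_cube n)"
proof -
  have eq: "unit_cube n = PiE UNIV (\<lambda>i. if i<n then {0..1} else {0::real})"
    using eq1 by blast
  have "compactin (powertop_real UNIV) (PiE UNIV (\<lambda>i. if i<n then {0..1} else {0::real}))"
    by (subst compactin_PiE) auto
  then show ?thesis
    by (simp add: eq euclidean_product_topology)
qed
lemma coord_cont: "continuous_on S (\<lambda>u::nat\<Rightarrow>real. u i)"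
  by (rule continuous_on_subset[OF continuous_on_product_coordinates]) auto

lemma closed_unit_cube: "closed (unit_cube n)"
  by (simp add: compact_imp_closed compact_unit_cube)

lemma conv01:
  fixes t a b :: real
  assumes "0\<le>t" "t\<le>1" "0\<le>a" "a\<le>1" "0\<le>b" "b\<le>1"
  shows "0 \<le> (1-t)*a + t*b \<and> (1-t)*a+t*b \<le> 1"
proof -
  have "(1-t)*a \<le> (1-t)" using assms by (simp add: mult_left_le)
  moreover have "t*b \<le> t" using assms by (simp add: mult_left_le)
  moreover have "0 \<le> (1-t)*a" "0 \<le> t*b" using assms by auto
  ultimately show ?thesis by linarith
qed

lemma comb_pos:
  fixes t a b :: real
  assumes "0\<le>t" "t\<le>1" "0<a" "0<b"
  shows "0 < (1-t)*a + t*b"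
proof (cases "t = 1")
  case True then show ?thesis using assms by simp
next
  case False
  then have "0 < (1-t)*a" using assms by simp
  moreover have "0 \<le> t*b" using assms by simp
  ultimately show ?thesis by linarith
qed

lemma miranda:
  fixes g :: "(nat\<Rightarrow>real) \<Rightarrow> nat \<Rightarrow> real"
  assumes n: "1 \<le> n"
    and cont: "\<And>s. s<n \<Longrightarrow> continuous_on (unit_cube n) (\<lambda>x. g x s)"
    and neg: "\<And>s x. \<lbrakk>s<n; x\<in>unit_cube n; x s = 0\<rbrakk> \<Longrightarrow> g x s < 0"
    and pos: "\<And>s x. \<lbrakk>s<n; x\<in>unit_cube n; x s = 1\<rbrakk> \<Longrightarrow> g x s > 0"
  shows "\<exists>x\<in>unit_cube n. \<forall>s<n. g x s = 0"
proof (rule ccontr)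
  assume "\<not> ?thesis"
  then have nz: "\<And>x. x\<in>unit_cube n \<Longrightarrow> \<exists>s<n. g x s \<noteq> 0" by blast
  define m where "m = n - 1"
  have mn: "\<And>i. i \<le> m \<longleftrightarrow> i < n" using n by (auto simp: m_def)
  have mn2: "\<And>i. m < i \<Longrightarrow> \<not> i < n" using mn by (meson not_le)
  have cardm: "card {..m} = n" using n by (simp add: m_def)
  define Sph where "Sph = {u::nat\<Rightarrow>real. (\<Sum>i\<le>m. (u i)^2) = 1 \<and> (\<forall>i>m. u i = 0)}"
  have "nsphere m = top_of_set Sph" by (simp add: nsphere Sph_def euclidean_product_topology)
  then have ncon: "\<not> contractible_space (top_of_set Sph)" using non_contractible_space_nsphere by metis
  define Q where "Q = unit_cube n"
  define ctr where "ctr = (\<lambda>i::nat. if i<n then 1/2 else (0::real))"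
  have conQ0: "homotopic_with (\<lambda>x. True) (top_of_set Q) (top_of_set Q) id (\<lambda>x. ctr)"
  proof -
    let ?h = "\<lambda>(t::real,x::nat\<Rightarrow>real) i. (1-t) * x i + t * ctr i"
    have "continuous_map (prod_topology (top_of_set {0..1}) (top_of_set Q)) (top_of_set Q) ?h"
      unfolding prod_topology_subtopology_eu continuous_map_subtopology_eu
    proof
      show "continuous_on ({0..1} \<times> Q) ?h"
        unfolding case_prod_unfold
        by (intro continuous_on_coordinatewise_then_product continuous_intros
              continuous_on_compose2[OF coord_cont continuous_on_snd]) auto
      show "?h \<in> {0..1} \<times> Q \<rightarrow> Q"
      proof
        fix p assume "p \<in> {0..1::real} \<times> Q"
        then obtain t x where p: "p = (t,x)" and t: "t \<in> {0..1}" and x: "x \<in> Q" by blast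
        have "\<forall>i<n. 0 \<le> (1-t)*x i + t*(1/2) \<and> (1-t)*x i + t*(1/2) \<le> 1"
          using x t conv01[of t] by (auto simp: Q_def unit_cube_def simp del: times_divide_eq_right)
        then show "?h p \<in> Q"
          using x t by (auto simp: p Q_def unit_cube_def ctr_def)
      qed
    qed
    moreover have "\<forall>x\<in>Q. ?h (0,x) = id x" by auto
    moreover have "\<forall>x\<in>Q. ?h (1,x) = ctr" by auto
    ultimately show ?thesis
      by (subst homotopic_with) auto
  qed
  then have conQ: "contractible_space (top_of_set Q)"
    unfolding contractible_space_def by blast
  define G where "G = (\<lambda>x i. if i<n then g x i else 0)"
  define Nz where "Nz = (\<lambda>v::nat\<Rightarrow>real. \<lambda>i. v i / sqrt (\<Sum>j\<le>m. (v j)^2))"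
  define c where "c = (\<lambda>u::nat\<Rightarrow>real. \<lambda>i. if i<n then max 0 (min 1 (1/2 + real n * u i)) else 0)"
  have cQ: "c u \<in> Q" for u by (auto simp: c_def Q_def unit_cube_def)
  have ccont1: "continuous_on S (\<lambda>x::nat\<Rightarrow>real. if i<n then max 0 (min 1 (1/2 + real n * x i)) else 0)" for S i
    by (cases "i<n") (auto intro!: continuous_intros coord_cont)
  have ccont: "continuous_on S c" for S
    unfolding c_def
    by (intro continuous_on_coordinatewise_then_product ccont1)
  have Gcont: "continuous_on Q (\<lambda>x. G x j)" for j
    unfolding G_def using cont by (cases "j<n") (auto simp: Q_def)
  have NzS: "Nz v \<in> Sph" if "(\<Sum>j\<le>m. (v j)^2) > 0" "\<forall>i>m. v i = 0" for v
    using that by (auto simp: Nz_def Sph_def power_divide simp flip: sum_divide_distrib)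
  have GS: "(\<Sum>j\<le>m. (G x j)^2) > 0" if xQ: "x \<in> Q" for x
  proof -
    obtain s where s: "s<n" "g x s \<noteq> 0" using nz xQ Q_def by blast
    show ?thesis
      by (rule sum_pos2[of _ s]) (use s mn in \<open>auto simp: G_def\<close>)
  qed
  have f1cont: "continuous_on Q (Nz \<circ> G)"
    unfolding Nz_def o_def
    by (intro continuous_on_coordinatewise_then_product continuous_intros Gcont)
       (use GS in \<open>fastforce\<close>)
  have f1S: "(Nz \<circ> G) x \<in> Sph" if "x \<in> Q" for x
    using NzS[OF GS[OF that]] by (auto simp: G_def mn[symmetric])
  define w where "w = (\<lambda>(t::real,u::nat\<Rightarrow>real) i. (1-t) * G (c u) i + t * u i)"
  have big: "\<exists>i<n. 1 \<le> real n * \<bar>u i\<bar>" if "u \<in> Sph" for u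
  proof (rule ccontr)
    assume "\<not> ?thesis"
    then have lt: "\<And>i. i \<le> m \<Longrightarrow> (real n * u i)^2 < 1"
      by (simp add: mn abs_square_less_1 power_mult_distrib) (metis abs_mult abs_of_nat abs_square_less_1 not_le power_mult_distrib)
    have "(\<Sum>i\<le>m. (real n * u i)^2) < (\<Sum>i\<le>m. 1)"
      by (rule sum_strict_mono) (use lt in auto)
    moreover have "(\<Sum>i\<le>m. (real n * u i)^2) = (real n)^2"
      using that by (simp add: Sph_def power_mult_distrib flip: sum_distrib_left)
    moreover have "(\<Sum>i\<le>m. (1::real)) = real n" using cardm by simp
    ultimately have "(real n)^2 < real n" by linarith
    moreover have "real n * 1 \<le> real n * real n" using n by (intro mult_left_mono) auto
    ultimately show False by (simp add: power2_eq_square)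
  qed
  have wS: "(\<Sum>j\<le>m. (w (t,u) j)^2) > 0" if tu: "u \<in> Sph" "t \<in> {0..1}" for t u
  proof -
    obtain i where i: "i<n" "1 \<le> real n * \<bar>u i\<bar>" using big tu by blast
    have "w (t,u) i \<noteq> 0"
    proof (cases "u i > 0")
      case True
      then have "1 \<le> real n * u i" using i by simp
      then have "c u i = 1" using i by (simp add: c_def)
      then have "g (c u) i > 0" using pos[OF i(1)] cQ Q_def by blast
      then show ?thesis using True tu i(1)
        using comb_pos[of t "g (c u) i" "u i"] by (auto simp: w_def G_def)
    next
      case False
      then have "u i < 0" using i by (cases "u i = 0") auto
      then have "real n * u i \<le> -1" using i by simp
      then have "c u i = 0" using i by (simp add: c_def)
      then have "g (c u) i < 0" using neg[OF i(1)] cQ Q_def by blast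
      then show ?thesis using \<open>u i < 0\<close> tu i(1)
        using comb_pos[of t "- g (c u) i" "- u i"] by (auto simp: w_def G_def)
    qed
    then show ?thesis
      by (intro sum_pos2[of _ i]) (use i mn in auto)
  qed
  have wcont: "continuous_on ({0..1} \<times> Sph) (\<lambda>p. w p j)" for j
  proof -
    have GcS: "continuous_on Sph (\<lambda>u. G (c u) j)"
      by (rule continuous_on_compose2[OF Gcont[of j] ccont]) (auto simp: cQ)
    have A: "continuous_on ({0..1} \<times> Sph) (\<lambda>p. G (c (snd p)) j)"
      by (rule continuous_on_compose2[OF GcS continuous_on_snd]) auto
    have B: "continuous_on ({0..1} \<times> Sph) (\<lambda>p. snd p j)"
      by (rule continuous_on_compose2[OF coord_cont[of UNIV] continuous_on_snd]) auto
    have "continuous_on ({0..1} \<times> Sph) (\<lambda>p. (1 - fst p) * G (c (snd p)) j + fst p * snd p j)"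
      by (intro continuous_on_add continuous_on_mult continuous_on_diff continuous_on_const continuous_on_fst continuous_on_id A B)
    then show ?thesis
      unfolding w_def case_prod_unfold .
  qed
  have hom: "homotopic_with (\<lambda>x. True) (top_of_set Sph) (top_of_set Sph) ((Nz \<circ> G) \<circ> c) id"
  proof -
    let ?h = "\<lambda>p. Nz (w p)"
    have "continuous_map (prod_topology (top_of_set {0..1}) (top_of_set Sph)) (top_of_set Sph) ?h"
      unfolding prod_topology_subtopology_eu continuous_map_subtopology_eu
    proof
      have "continuous_on ({0..1} \<times> Sph) (\<lambda>p. w p i / sqrt (\<Sum>j\<le>m. (w p j)^2))" for i
      proof (rule continuous_on_divide)
        show "continuous_on ({0..1} \<times> Sph) (\<lambda>p. sqrt (\<Sum>j\<le>m. (w p j)^2))"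
          by (intro continuous_on_real_sqrt continuous_on_sum continuous_on_power wcont)
        show "\<forall>p\<in>{0..1} \<times> Sph. sqrt (\<Sum>j\<le>m. (w p j)^2) \<noteq> 0"
          using wS by fastforce
      qed (rule wcont)
      then show "continuous_on ({0..1} \<times> Sph) ?h"
        unfolding Nz_def
        by (intro continuous_on_coordinatewise_then_product)
      show "?h \<in> {0..1} \<times> Sph \<rightarrow> Sph"
      proof
        fix p assume "p \<in> {0..1::real} \<times> Sph"
        then obtain t u where p: "p = (t,u)" and "t \<in> {0..1}" and "u \<in> Sph" by blast
        moreover have "\<forall>i>m. w (t,u) i = 0" using \<open>u \<in> Sph\<close> mn2 by (auto simp: w_def G_def Sph_def)
        ultimately show "Nz (w p) \<in> Sph" using wS NzS p by blast
      qed
    qed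
    moreover have "\<forall>x\<in>Sph. ?h (0,x) = ((Nz \<circ> G) \<circ> c) x"
      by (auto simp: w_def)
    moreover have "\<forall>x\<in>Sph. ?h (1,x) = id x"
      by (auto simp: w_def Nz_def Sph_def)
    ultimately show ?thesis
      by (subst homotopic_with) auto
  qed
  have "contractible_space (top_of_set Sph)"
  proof (rule homotopy_dominated_contractibility[OF _ _ hom conQ])
    show "continuous_map (top_of_set Q) (top_of_set Sph) (Nz \<circ> G)"
      using f1cont f1S by (auto simp: continuous_map_subtopology_eu)
    show "continuous_map (top_of_set Sph) (top_of_set Q) c"
      using ccont cQ by (auto simp: continuous_map_subtopology_eu)
  qed
  with ncon show False by blast
qed



lemma dist_fun_le:
  fixes x y :: "nat \<Rightarrow> real"
  assumes le: "\<And>i. \<bar>x i - y i\<bar> \<le> e"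
  shows "dist x y \<le> 2 * e"
proof -
  have e: "0 \<le> e" using le[of 0] by linarith
  have s1: "summable (\<lambda>n. (1/2::real)^n * e)"
    by (intro summable_mult2 summable_geometric) simp
  have lt: "(1/2::real)^n * min (dist (x (from_nat n)) (y (from_nat n))) 1 \<le> (1/2)^n * e" for n
  proof (rule mult_left_mono)
    show "min (dist (x (from_nat n)) (y (from_nat n))) 1 \<le> e"
      using le[of "from_nat n"] by (simp add: dist_real_def)
  qed simp
  have s0: "summable (\<lambda>n. (1/2::real)^n * min (dist (x (from_nat n)) (y (from_nat n))) 1)"
    by (rule summable_comparison_test'[OF s1, of 0]) (use lt in auto)
  have "dist x y = suminf (\<lambda>n. (1/2::real)^n * min (dist (x (from_nat n)) (y (from_nat n))) 1)"
    by (simp add: dist_fun_def)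
  also have "\<dots> \<le> suminf (\<lambda>n. (1/2::real)^n * e)"
    by (rule suminf_le[OF lt s0 s1])
  also have "\<dots> = 2 * e"
    using suminf_geometric[of "1/2::real"] by (simp add: suminf_mult2[symmetric, OF summable_geometric] )
  finally show ?thesis .
qed

lemma sepfun:
  fixes A B :: "'a::metric_space set"
  assumes "closed A" "closed B" "A \<inter> B = {}" "A \<noteq> {}" "B \<noteq> {}"
  shows "x \<in> A \<Longrightarrow> infdist x A - infdist x B < 0"
    and "x \<in> B \<Longrightarrow> infdist x A - infdist x B > 0"
proof -
  assume "x \<in> A"
  then have "infdist x A = 0" "0 < infdist x B"
    using assms by (auto intro!: infdist_pos_not_in_closed simp: infdist_zero)
  then show "infdist x A - infdist x B < 0" by simp
next
  assume "x \<in> B"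
  then have "infdist x B = 0" "0 < infdist x A"
    using assms by (auto intro!: infdist_pos_not_in_closed simp: infdist_zero)
  then show "infdist x A - infdist x B > 0" by simp
qed

lemma extract_conn:
  fixes K F0 F1 :: "(nat\<Rightarrow>real) set"
  assumes K: "compact K" and F: "closed F0" "closed F1"
    and nosep: "\<not>(\<exists>A B. closed A \<and> closed B \<and> A \<inter> B = {} \<and> K \<subseteq> A \<union> B \<and> A \<inter> F1 = {} \<and> B \<inter> F0 = {})"
  shows "\<exists>S. S \<subseteq> K \<and> compact S \<and> connected S \<and> S \<inter> F0 \<noteq> {} \<and> S \<inter> F1 \<noteq> {}"
proof -
  let ?X = "top_of_set K"
  have Kc: "closed K" using K compact_imp_closed by blast
  have nsb: "\<not> separated_between ?X (K \<inter> F0) (K \<inter> F1)"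
  proof
    assume "separated_between ?X (K \<inter> F0) (K \<inter> F1)"
    then obtain U V where UV: "openin ?X U" "openin ?X V" "U \<union> V = K" "disjnt U V"
      "K \<inter> F0 \<subseteq> U" "K \<inter> F1 \<subseteq> V"
      unfolding separated_between_def by auto
    have KU: "K - U = V" "K - V = U" using UV by (auto simp: disjnt_def)
    have "closedin ?X U"
      unfolding closedin_def using UV KU by auto
    then have cU: "closed U" using Kc closedin_closed_trans by blast
    have "closedin ?X V"
      unfolding closedin_def using UV KU by auto
    then have cV: "closed V" using Kc closedin_closed_trans by blast
    have "U \<inter> V = {}" using UV by (simp add: disjnt_def)
    moreover have "U \<inter> F1 = {}" "V \<inter> F0 = {}" using UV by (auto simp: disjnt_def)
    ultimately show False using nosep cU cV UV(3) by blast
  qed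
  have "\<exists>C. connectedin ?X C \<and> \<not> disjnt C (K \<inter> F0) \<and> \<not> disjnt C (K \<inter> F1)"
  proof (rule ccontr)
    assume "\<nexists>C. connectedin ?X C \<and> \<not> disjnt C (K \<inter> F0) \<and> \<not> disjnt C (K \<inter> F1)"
    then have "separated_between ?X (K \<inter> F0) (K \<inter> F1)"
      by (intro cut_wire_fence_theorem)
        (auto simp: compact_space_subtopology K Hausdorff_space_subtopology closedin_closed_Int F)
    with nsb show False by blast
  qed
  then obtain C where C: "connectedin ?X C" "\<not> disjnt C (K \<inter> F0)" "\<not> disjnt C (K \<inter> F1)" by blast
  then have CK: "C \<subseteq> K" and cC: "connected C"
    by (auto simp: connectedin_subtopology connectedin_iff_connected)
  define S where "S = closure C"
  have SK: "S \<subseteq> K" unfolding S_def using CK Kc by (simp add: closure_minimal)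
  have "compact S" unfolding S_def
    using compact_Int_closed[OF K closed_closure[of C]] SK S_def by (simp add: Int_absorb1)
  moreover have "connected S" unfolding S_def using cC by (rule connected_imp_connected_closure)
  moreover have "S \<inter> F0 \<noteq> {}" "S \<inter> F1 \<noteq> {}"
    using C closure_subset[of C] unfolding S_def disjnt_def by blast+
  ultimately show ?thesis using SK by blast
qed

lemma comb_neg_sum:
  fixes w v :: "'a \<Rightarrow> real"
  assumes P: "finite P" and w: "\<And>p. p \<in> P \<Longrightarrow> 0 \<le> w p" and sw: "sum w P \<le> 1"
    and v: "\<And>p. p \<in> P \<Longrightarrow> v p < 0" and c: "c < 0"
  shows "(\<Sum>p\<in>P. w p * v p) + (1 - sum w P) * c < 0"
proof -
  define M where "M = Max (insert c (v ` P))"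
  have fin: "finite (insert c (v ` P))" using P by simp
  have M: "M < 0"
    using Max_in[OF fin] c v unfolding M_def by auto
  have vM: "v p \<le> M" if "p \<in> P" for p unfolding M_def using fin that by (intro Max_ge) auto
  have cM: "c \<le> M" unfolding M_def using fin by (intro Max_ge) auto
  have "(\<Sum>p\<in>P. w p * v p) \<le> (\<Sum>p\<in>P. w p * M)"
    by (intro sum_mono mult_left_mono vM w)
  also have "\<dots> = sum w P * M" by (simp add: sum_distrib_right)
  finally have 1: "(\<Sum>p\<in>P. w p * v p) \<le> sum w P * M" .
  have 2: "(1 - sum w P) * c \<le> (1 - sum w P) * M"
    using sw cM by (intro mult_left_mono) auto
  have "(\<Sum>p\<in>P. w p * v p) + (1 - sum w P) * c \<le> sum w P * M + (1 - sum w P) * M"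
    using 1 2 by linarith
  also have "\<dots> = M" by (simp add: algebra_simps)
  finally show ?thesis using M by linarith
qed

lemma comb_pos_sum:
  fixes w v :: "'a \<Rightarrow> real"
  assumes P: "finite P" and w: "\<And>p. p \<in> P \<Longrightarrow> 0 \<le> w p" and sw: "sum w P \<le> 1"
    and v: "\<And>p. p \<in> P \<Longrightarrow> v p > 0" and c: "c > 0"
  shows "(\<Sum>p\<in>P. w p * v p) + (1 - sum w P) * c > 0"
proof -
  have "(\<Sum>p\<in>P. w p * (- v p)) + (1 - sum w P) * (- c) < 0"
    by (rule comb_neg_sum) (use assms in auto)
  moreover have "(\<Sum>p\<in>P. w p * (- v p)) = - (\<Sum>p\<in>P. w p * v p)"
    by (simp add: sum_negf)
  ultimately show ?thesis by (simp add: algebra_simps)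
qed

lemma one_active:
  fixes w v :: "'a \<Rightarrow> real"
  assumes "finite P" "p0 \<in> P" "\<And>p. p \<in> P \<Longrightarrow> p \<noteq> p0 \<Longrightarrow> w p = 0"
  shows "(\<Sum>p\<in>P. w p * v p) = w p0 * v p0" "sum w P = w p0"
proof -
  have "(\<Sum>p\<in>P. w p * v p) = w p0 * v p0 + (\<Sum>p\<in>P - {p0}. w p * v p)"
    using assms by (simp add: sum.remove)
  also have "(\<Sum>p\<in>P - {p0}. w p * v p) = 0" using assms by (intro sum.neutral) auto
  finally show "(\<Sum>p\<in>P. w p * v p) = w p0 * v p0" by simp
  have "sum w P = w p0 + sum w (P - {p0})"
    using assms by (simp add: sum.remove)
  also have "sum w (P - {p0}) = 0" using assms by (intro sum.neutral) auto
  finally show "sum w P = w p0" by simp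
qed

lemma sum_le_one_active:
  fixes w :: "'a \<Rightarrow> real"
  assumes fin: "finite P" and nn: "\<And>p. p \<in> P \<Longrightarrow> 0 \<le> w p" and le1: "\<And>p. p \<in> P \<Longrightarrow> w p \<le> 1"
    and uniq: "\<And>p q. p \<in> P \<Longrightarrow> q \<in> P \<Longrightarrow> w p > 0 \<Longrightarrow> w q > 0 \<Longrightarrow> p = q"
  shows "sum w P \<le> 1"
proof (cases "\<exists>p\<in>P. w p > 0")
  case True
  then obtain p0 where p0: "p0 \<in> P" "w p0 > 0" by blast
  have z: "w p = 0" if "p \<in> P" "p \<noteq> p0" for p
  proof -
    have "\<not> w p > 0" using uniq[of p p0] p0 that by blast
    then show ?thesis using nn[OF that(1)] by linarith
  qed
  have "sum w P = w p0" by (rule one_active(2)[OF fin p0(1)]) (rule z)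
  then show ?thesis using le1[OF p0(1)] by simp
next
  case False
  have "w p = 0" if "p \<in> P" for p
  proof -
    have "\<not> w p > 0" using False that by blast
    then show ?thesis using nn[OF that] by linarith
  qed
  then have "sum w P = 0" by (intro sum.neutral) blast
  then show ?thesis by simp
qed

definition tent :: "real \<Rightarrow> real \<Rightarrow> real \<Rightarrow> real \<Rightarrow> real" where
  "tent e a b x = max 0 (min 1 (min (x - a) (b - x) / e + 1))"

lemma tent_props:
  assumes "e > 0"
  shows "0 \<le> tent e a b x" "tent e a b x \<le> 1"
    and "a \<le> x \<Longrightarrow> x \<le> b \<Longrightarrow> tent e a b x = 1"
    and "tent e a b x > 0 \<Longrightarrow> a - e < x \<and> x < b + e"
proof -
  show "0 \<le> tent e a b x" "tent e a b x \<le> 1" by (auto simp: tent_def)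
  show "a \<le> x \<Longrightarrow> x \<le> b \<Longrightarrow> tent e a b x = 1"
    using assms by (auto simp: tent_def)
  assume "tent e a b x > 0"
  then have "min (x - a) (b - x) / e + 1 > 0" by (auto simp: tent_def)
  then have "0 < (min (x - a) (b - x) / e + 1) * e" using assms by simp
  also have "\<dots> = min (x - a) (b - x) + e" using assms by (simp add: distrib_right)
  finally have "min (x - a) (b - x) > - e" by linarith
  moreover have "min (x - a) (b - x) \<le> x - a" "min (x - a) (b - x) \<le> b - x" by auto
  ultimately show "a - e < x \<and> x < b + e" by linarith
qed

lemma tent_cont: "continuous_on S g \<Longrightarrow> e > 0 \<Longrightarrow> continuous_on S (\<lambda>y. tent e a b (g y))"
  unfolding tent_def by (intro continuous_intros) auto

lemma int_LL:
  fixes k k' :: int and z b :: real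
  assumes "\<bar>z - k\<bar> < b" "\<bar>z - k'\<bar> < b" "b \<le> 1/2"
  shows "k = k'"
proof -
  have "\<bar>real_of_int k - k'\<bar> < 1" using assms by linarith
  then show ?thesis by linarith
qed

lemma int_NN:
  fixes k k' :: int and z a :: real
  assumes "k + a < z" "z < k + 1 - a" "k' + a < z" "z < k' + 1 - a" "0 \<le> a"
  shows "k = k'"
proof (rule ccontr)
  assume "k \<noteq> k'"
  then have "k + 1 \<le> k' \<or> k' + 1 \<le> k" by linarith
  then show False
  proof
    assume "k + 1 \<le> k'"
    then have "real_of_int k + 1 \<le> k'" by linarith
    then show False using assms by linarith
  next
    assume "k' + 1 \<le> k"
    then have "real_of_int k' + 1 \<le> k" by linarith
    then show False using assms by linarith
  qed
qed

lemma int_LN: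
  fixes k k' :: int and z a b :: real
  assumes "\<bar>z - k\<bar> < b" "k' + a < z" "z < k' + 1 - a" "b \<le> a"
  shows False
proof (cases "k \<le> k'")
  case True
  then have "real_of_int k \<le> k'" by linarith
  then show False using assms by linarith
next
  case False
  then have "real_of_int k' + 1 \<le> k" by linarith
  then show False using assms by linarith
qed

definition aa :: "nat \<Rightarrow> nat \<Rightarrow> real" where "aa n j = real j / (2 * real n)"
definition eta :: "nat \<Rightarrow> real" where "eta n = 1 / (8 * real n)"
definition lo :: "nat \<Rightarrow> nat \<Rightarrow> nat set \<Rightarrow> (nat \<Rightarrow> int) \<Rightarrow> nat \<Rightarrow> real" where
  "lo n s L k l = (if l \<in> L then of_int (k l) - aa n s else of_int (k l) + aa n (Suc s))"
definition hi :: "nat \<Rightarrow> nat \<Rightarrow> nat set \<Rightarrow> (nat \<Rightarrow> int) \<Rightarrow> nat \<Rightarrow> real" where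
  "hi n s L k l = (if l \<in> L then of_int (k l) + aa n s else of_int (k l) + 1 - aa n (Suc s))"

lemma aa_facts:
  assumes "1 \<le> n" "s < n"
  shows "aa n s + eta n \<le> aa n (Suc s) - eta n" "aa n s + eta n \<le> 1/2" "0 \<le> aa n (Suc s) - eta n"
    "0 \<le> aa n s" "2 * aa n s \<le> 1" "aa n s \<le> aa n (Suc s)" "0 < eta n" "aa n (Suc s) \<le> 1/2"
proof -
  have n0: "real n > 0" using assms by simp
  have sn: "real s + 1 \<le> real n" using assms by simp
  show "aa n s + eta n \<le> aa n (Suc s) - eta n"
    using n0 by (simp add: aa_def eta_def field_simps)
  show "aa n s + eta n \<le> 1/2"
    using n0 sn by (simp add: aa_def eta_def field_simps)
  show "0 \<le> aa n (Suc s) - eta n"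
    using n0 by (simp add: aa_def eta_def field_simps)
  show "0 \<le> aa n s" using n0 by (simp add: aa_def)
  show "2 * aa n s \<le> 1" using n0 sn by (simp add: aa_def field_simps)
  show "aa n s \<le> aa n (Suc s)" using n0 by (simp add: aa_def field_simps)
  show "0 < eta n" using n0 by (simp add: eta_def)
  show "aa n (Suc s) \<le> 1/2" using n0 sn by (simp add: aa_def field_simps)
qed

lemma width_le:
  assumes "1 \<le> n" "s < n"
  shows "hi n s L k l - lo n s L k l \<le> 1"
  using aa_facts[OF assms] by (auto simp: hi_def lo_def)

lemma col_unique:
  assumes n: "1 \<le> n" "s < n"
    and L: "L \<subseteq> {..<m}" "L' \<subseteq> {..<m}"
    and k: "k \<in> PiE {..<m} (\<lambda>_. {-KK..KK})" "k' \<in> PiE {..<m} (\<lambda>_. {-KK..KK})"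
    and z1: "\<And>l. l < m \<Longrightarrow> lo n s L k l - eta n < z l \<and> z l < hi n s L k l + eta n"
    and z2: "\<And>l. l < m \<Longrightarrow> lo n s L' k' l - eta n < z l \<and> z l < hi n s L' k' l + eta n"
  shows "L = L' \<and> k = k'"
proof -
  note A = aa_facts[OF n]
  have LL: "l \<in> L \<longleftrightarrow> l \<in> L'" if l: "l < m" for l
  proof
    assume "l \<in> L"
    show "l \<in> L'"
    proof (rule ccontr)
      assume "l \<notin> L'"
      have "\<bar>z l - k l\<bar> < aa n s + eta n" using \<open>l \<in> L\<close> z1[OF l] by (auto simp: lo_def hi_def abs_less_iff)
      moreover have "k' l + (aa n (Suc s) - eta n) < z l" "z l < k' l + 1 - (aa n (Suc s) - eta n)"
        using \<open>l \<notin> L'\<close> z2[OF l] by (auto simp: lo_def hi_def abs_less_iff)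
      ultimately show False using int_LN A(1) by blast
    qed
  next
    assume "l \<in> L'"
    show "l \<in> L"
    proof (rule ccontr)
      assume "l \<notin> L"
      have "\<bar>z l - k' l\<bar> < aa n s + eta n" using \<open>l \<in> L'\<close> z2[OF l] by (auto simp: lo_def hi_def abs_less_iff)
      moreover have "k l + (aa n (Suc s) - eta n) < z l" "z l < k l + 1 - (aa n (Suc s) - eta n)"
        using \<open>l \<notin> L\<close> z1[OF l] by (auto simp: lo_def hi_def abs_less_iff)
      ultimately show False using int_LN A(1) by blast
    qed
  qed
  then have "L = L'" using L by blast
  moreover have "k l = k' l" if l: "l \<in> {..<m}" for l
  proof (cases "l \<in> L")
    case True
    then have "l \<in> L'" using LL l by auto
    have "\<bar>z l - k l\<bar> < aa n s + eta n" using True z1[of l] l by (auto simp: lo_def hi_def abs_less_iff)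
    moreover have "\<bar>z l - k' l\<bar> < aa n s + eta n" using \<open>l \<in> L'\<close> z2[of l] l by (auto simp: lo_def hi_def abs_less_iff)
    ultimately show ?thesis using int_LL A(2) by blast
  next
    case False
    then have "l \<notin> L'" using LL l by auto
    have "k l + (aa n (Suc s) - eta n) < z l" "z l < k l + 1 - (aa n (Suc s) - eta n)"
      using False z1[of l] l by (auto simp: lo_def hi_def abs_less_iff)
    moreover have "k' l + (aa n (Suc s) - eta n) < z l" "z l < k' l + 1 - (aa n (Suc s) - eta n)"
      using \<open>l \<notin> L'\<close> z2[of l] l by (auto simp: lo_def hi_def abs_less_iff)
    ultimately show ?thesis using int_NN A(3) by blast
  qed
  then have "k = k'" using k by (intro PiE_ext) auto
  ultimately show ?thesis by blast
qed


lemma col_cover: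
  assumes n: "n = Suc m" and h: "h > 0" and y: "\<And>l. l < m \<Longrightarrow> \<bar>y l\<bar> \<le> R"
    and KK: "KK = \<lceil>R/h\<rceil> + 1"
  shows "\<exists>s<n. \<exists>L k. L \<subseteq> {..<m} \<and> card L = s \<and> k \<in> PiE {..<m} (\<lambda>_. {-KK..KK}) \<and>
           (\<forall>l<m. lo n s L k l \<le> y l / h \<and> y l / h \<le> hi n s L k l)"
proof -
  define z where "z l = y l / h" for l
  define fr where "fr l = z l - of_int \<lfloor>z l\<rfloor>" for l
  define dd where "dd l = min (fr l) (1 - fr l)" for l
  define cnt where "cnt j = card {l\<in>{..<m}. dd l \<le> aa n j}" for j
  define S where "S = {j. j \<le> m \<and> j \<le> cnt j}"
  define s where "s = Max S"
  have finS: "finite S" unfolding S_def by (rule finite_subset[of _ "{..m}"]) auto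
  have "0 \<in> S" by (simp add: S_def)
  then have sS: "s \<in> S" using finS unfolding s_def by (intro Max_in) auto
  have Smax: "j \<le> s" if "j \<in> S" for j using finS that unfolding s_def by (intro Max_ge)
  have sm: "s \<le> m" "s \<le> cnt s" using sS by (auto simp: S_def)
  have sn: "s < n" using sm n by simp
  note A = aa_facts[of n s, OF _ sn]
  have n1: "1 \<le> n" using n by simp
  define L where "L = {l\<in>{..<m}. dd l \<le> aa n s}"
  have Lsub: "L \<subseteq> {..<m}" by (auto simp: L_def)
  have cntL: "card L = cnt s" by (simp add: L_def cnt_def)
  have cLm: "card L \<le> m" using card_mono[OF _ Lsub] by simp
  have key: "card L = s \<and> (\<forall>l<m. l \<notin> L \<longrightarrow> dd l > aa n (Suc s))"
  proof (cases "s = m")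
    case True
    then have "card L = m" using cLm sm cntL by simp
    then have "L = {..<m}" using Lsub by (intro card_subset_eq) auto
    then show ?thesis using True by auto
  next
    case False
    then have sm1: "Suc s \<le> m" using sm by simp
    have "Suc s \<notin> S" using Smax by fastforce
    then have c2: "cnt (Suc s) \<le> s" using sm1 by (simp add: S_def)
    define L2 where "L2 = {l\<in>{..<m}. dd l \<le> aa n (Suc s)}"
    have LL2: "L \<subseteq> L2" using A(6)[OF n1] by (auto simp: L_def L2_def)
    have fin2: "finite L2" by (simp add: L2_def)
    have "card L \<le> card L2" using card_mono[OF fin2 LL2] .
    moreover have "card L2 = cnt (Suc s)" by (simp add: L2_def cnt_def)
    ultimately have cL: "card L = s" "card L = card L2" using c2 sm cntL by auto
    then have "L = L2" using LL2 fin2 by (intro card_subset_eq) auto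
    then show ?thesis using cL by (auto simp: L2_def)
  qed
  have zb: "\<bar>z l\<bar> \<le> R / h" if "l < m" for l
    using y[OF that] h by (simp add: z_def abs_divide divide_right_mono)
  have fl_hi: "\<lfloor>z l\<rfloor> + 1 \<le> KK" if "l < m" for l
  proof -
    have "real_of_int \<lfloor>z l\<rfloor> \<le> real_of_int \<lceil>R/h\<rceil>"
      using zb[OF that] of_int_floor_le[of "z l"] le_of_int_ceiling[of "R/h"] by linarith
    then show ?thesis unfolding KK by linarith
  qed
  have fl_lo: "-KK \<le> \<lfloor>z l\<rfloor>" if "l < m" for l
  proof -
    have "- (R/h) \<le> z l" using zb[OF that] by linarith
    then have "\<lfloor>- (R/h)\<rfloor> \<le> \<lfloor>z l\<rfloor>" by (rule floor_mono)
    moreover have "\<lfloor>- (R/h)\<rfloor> = - \<lceil>R/h\<rceil>" by (simp add: ceiling_def)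
    ultimately show ?thesis unfolding KK by linarith
  qed
  define k where "k = restrict (\<lambda>l. if l \<in> L then (if fr l \<le> 1/2 then \<lfloor>z l\<rfloor> else \<lfloor>z l\<rfloor> + 1) else \<lfloor>z l\<rfloor>) {..<m}"
  have kP: "k \<in> PiE {..<m} (\<lambda>_. {-KK..KK})"
  proof -
    have vals: "-KK \<le> \<lfloor>z l\<rfloor> \<and> \<lfloor>z l\<rfloor> \<le> KK \<and> -KK \<le> \<lfloor>z l\<rfloor> + 1 \<and> \<lfloor>z l\<rfloor> + 1 \<le> KK" if "l < m" for l
      using fl_hi[OF that] fl_lo[OF that] by linarith
    show ?thesis unfolding k_def using vals by (auto intro!: restrict_PiE_iff[THEN iffD2])
  qed
  have fr01: "0 \<le> fr l" "fr l < 1" for l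
    unfolding fr_def using of_int_floor_le[of "z l"] real_of_int_floor_gt_diff_one[of "z l"] by linarith+
  have mem: "lo n s L k l \<le> z l \<and> z l \<le> hi n s L k l" if l: "l < m" for l
  proof -
    have fz: "fr l = z l - of_int \<lfloor>z l\<rfloor>" by (simp add: fr_def)
    note f01 = fr01[of l]
    note a0 = A(4)[OF n1]
    show ?thesis
    proof (cases "l \<in> L")
      case True
      then have d: "dd l \<le> aa n s" by (simp add: L_def)
      show ?thesis
      proof (cases "fr l \<le> 1/2")
        case True
        then have "dd l = fr l" by (simp add: dd_def min_def)
        moreover have "k l = \<lfloor>z l\<rfloor>" using True \<open>l \<in> L\<close> l by (simp add: k_def)
        moreover have "lo n s L k l = k l - aa n s" "hi n s L k l = k l + aa n s"
          using \<open>l \<in> L\<close> by (simp_all add: lo_def hi_def)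
        ultimately show ?thesis using d f01 a0 fz by linarith
      next
        case False
        then have "dd l = 1 - fr l" by (simp add: dd_def min_def)
        moreover have "k l = \<lfloor>z l\<rfloor> + 1" using False \<open>l \<in> L\<close> l by (simp add: k_def)
        moreover have "lo n s L k l = k l - aa n s" "hi n s L k l = k l + aa n s"
          using \<open>l \<in> L\<close> by (simp_all add: lo_def hi_def)
        ultimately show ?thesis using d f01 a0 fz by linarith
      qed
    next
      case False
      then have d: "dd l > aa n (Suc s)" using key l by blast
      then have "fr l > aa n (Suc s)" "1 - fr l > aa n (Suc s)" by (auto simp: dd_def)
      moreover have "k l = \<lfloor>z l\<rfloor>" using False l by (simp add: k_def)
      moreover have "lo n s L k l = k l + aa n (Suc s)" "hi n s L k l = k l + 1 - aa n (Suc s)"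
        using False by (simp_all add: lo_def hi_def)
      ultimately show ?thesis using fz by linarith
    qed
  qed
  show ?thesis
    using sn Lsub key kP mem unfolding z_def by blast
qed


theorem theoremB:
  fixes n :: nat and f :: "(nat \<Rightarrow> real) \<Rightarrow> (nat \<Rightarrow> real)"
  assumes "n \<ge> 1"
    and "continuous_map (subtopology (Euclidean_space n) (unit_cube n)) (Euclidean_space (n - 1)) f"
  shows "\<exists>p \<in> topspace (Euclidean_space (n - 1)). \<exists>S.
           S \<subseteq> unit_cube n \<inter> f -` {p} \<and> compactin (Euclidean_space n) S \<and>
           connects_opposite_faces n S"
proof -
  note n = assms(1)
  define Q where "Q = unit_cube n"
  define m where "m = n - 1"
  have nm: "n = Suc m" using n by (simp add: m_def)
  have Qsub: "Q \<subseteq> topspace (Euclidean_space n)"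
    by (auto simp: Q_def unit_cube_def topspace_Euclidean_space)
  have tq: "topspace (subtopology (Euclidean_space n) Q) = Q" using Qsub by auto
  have fQ: "continuous_on Q f" and fT: "\<And>x. x \<in> Q \<Longrightarrow> f x \<in> topspace (Euclidean_space m)"
    using assms(2) unfolding cm_Euclidean_space_iff_continuous_on Q_def[symmetric] tq m_def
    by auto
  have fz: "f x l = 0" if "x \<in> Q" "m \<le> l" for x l
    using fT[OF that(1)] that(2) by (simp add: topspace_Euclidean_space)
  have cQ: "compact Q" "closed Q" by (simp_all add: Q_def compact_unit_cube closed_unit_cube)
  define Fm where "Fm i = {x\<in>Q. x i = 0}" for i
  define Fp where "Fp i = {x\<in>Q. x i = 1}" for i
  have cFm: "closed (Fm i)" for i
    unfolding Fm_def by (rule continuous_closed_preimage_constant[OF coord_cont cQ(2)])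
  have cFp: "closed (Fp i)" for i
    unfolding Fp_def by (rule continuous_closed_preimage_constant[OF coord_cont cQ(2)])
  define K where "K p = {x\<in>Q. f x = p}" for p
  have cK: "compact (K p)" for p
  proof -
    have "closed (K p)" unfolding K_def by (rule continuous_closed_preimage_constant[OF fQ cQ(2)])
    then have "compact (Q \<inter> K p)" by (rule compact_Int_closed[OF cQ(1)])
    moreover have "Q \<inter> K p = K p" by (auto simp: K_def)
    ultimately show ?thesis by simp
  qed
  define sep where "sep p i \<longleftrightarrow> (\<exists>A B. closed A \<and> closed B \<and> A \<inter> B = {} \<and> K p \<subseteq> A \<union> B \<and> A \<inter> Fp i = {} \<and> B \<inter> Fm i = {})" for p i
  have key: "\<exists>p. \<exists>i<n. \<not> sep p i"
  proof (rule ccontr)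
    assume "\<not> ?thesis"
    then have allsep: "\<And>p i. i<n \<Longrightarrow> sep p i" by blast
    have loc: "\<exists>N. open N \<and> p \<in> N \<and> (\<forall>i<n. \<exists>u::(nat\<Rightarrow>real)\<Rightarrow>real. continuous_on Q u \<and> (\<forall>x\<in>Fm i. u x < 0) \<and>
                 (\<forall>x\<in>Fp i. u x > 0) \<and> (\<forall>x\<in>Q. f x \<in> N \<longrightarrow> u x \<noteq> 0))" for p
    proof -
      have one: "\<exists>q::(nat\<Rightarrow>real) set \<times> ((nat\<Rightarrow>real)\<Rightarrow>real). open (fst q) \<and> p \<in> fst q \<and> continuous_on Q (snd q) \<and> (\<forall>x\<in>Fm i. snd q x < 0) \<and>
                 (\<forall>x\<in>Fp i. snd q x > 0) \<and> (\<forall>x\<in>Q. f x \<in> fst q \<longrightarrow> snd q x \<noteq> 0)" if i: "i<n" for i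
      proof -
        obtain A B where AB: "closed A" "closed B" "A \<inter> B = {}" "K p \<subseteq> A \<union> B" "A \<inter> Fp i = {}" "B \<inter> Fm i = {}"
          using allsep[of i p, OF i, unfolded sep_def] by blast
        define A' where "A' = A \<union> Fm i"
        define B' where "B' = B \<union> Fp i"
        have z0: "(\<lambda>j. 0::real) \<in> Fm i" by (simp add: Fm_def Q_def unit_cube_def)
        have z1: "(\<lambda>j. if j = i then 1 else 0::real) \<in> Fp i" using i by (simp add: Fp_def Q_def unit_cube_def)
        have FF: "Fm i \<inter> Fp i = {}" unfolding Fm_def Fp_def by force
        have cA: "closed A'" "closed B'" unfolding A'_def B'_def by (intro closed_Un AB cFm cFp)+
        have dj: "A' \<inter> B' = {}" using AB(3,5,6) FF unfolding A'_def B'_def by blast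
        have ne: "A' \<noteq> {}" "B' \<noteq> {}" using z0 z1 unfolding A'_def B'_def by blast+
        define u where "u x = infdist x A' - infdist x B'" for x
        have uA: "u x < 0" if "x \<in> A'" for x using sepfun(1)[OF cA dj ne that] by (simp add: u_def)
        have uB: "u x > 0" if "x \<in> B'" for x using sepfun(2)[OF cA dj ne that] by (simp add: u_def)
        have uc: "continuous_on Q u" unfolding u_def by (intro continuous_on_diff continuous_on_infdist continuous_on_id)
        define Z where "Z = {x\<in>Q. u x = 0}"
        have "closed Z" unfolding Z_def by (rule continuous_closed_preimage_constant[OF uc cQ(2)])
        then have "compact (Q \<inter> Z)" by (rule compact_Int_closed[OF cQ(1)])
        moreover have "Q \<inter> Z = Z" by (auto simp: Z_def)
        ultimately have "compact Z" by simp
        then have cfZ: "compact (f ` Z)"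
          by (rule compact_continuous_image[OF continuous_on_subset[OF fQ], rotated]) (auto simp: Z_def)
        define N where "N = - (f ` Z)"
        have oN: "open N" using compact_imp_closed[OF cfZ] by (simp add: N_def open_Compl)
        have pN: "p \<in> N"
          unfolding N_def
        proof
          assume "p \<in> f ` Z"
          then obtain z where z: "z \<in> Z" "f z = p" by blast
          then have "z \<in> K p" by (auto simp: K_def Z_def)
          then have "z \<in> A' \<union> B'" using AB(4) by (auto simp: A'_def B'_def)
          then have "u z \<noteq> 0" using uA uB by force
          then show False using z by (simp add: Z_def)
        qed
        have uN: "\<forall>x\<in>Q. f x \<in> N \<longrightarrow> u x \<noteq> 0" by (auto simp: N_def Z_def)
        have "\<forall>x\<in>Fm i. u x < 0" using uA by (auto simp: A'_def)
        moreover have "\<forall>x\<in>Fp i. u x > 0" using uB by (auto simp: B'_def)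
        ultimately have "open (fst (N,u)) \<and> p \<in> fst (N,u) \<and> continuous_on Q (snd (N,u)) \<and> (\<forall>x\<in>Fm i. snd (N,u) x < 0) \<and>
                 (\<forall>x\<in>Fp i. snd (N,u) x > 0) \<and> (\<forall>x\<in>Q. f x \<in> fst (N,u) \<longrightarrow> snd (N,u) x \<noteq> 0)"
          using oN pN uc uN by simp
        then show ?thesis by blast
      qed
      define F where "F i = (SOME q::(nat\<Rightarrow>real) set \<times> ((nat\<Rightarrow>real)\<Rightarrow>real). open (fst q) \<and> p \<in> fst q \<and> continuous_on Q (snd q) \<and> (\<forall>x\<in>Fm i. snd q x < 0) \<and>
                 (\<forall>x\<in>Fp i. snd q x > 0) \<and> (\<forall>x\<in>Q. f x \<in> fst q \<longrightarrow> snd q x \<noteq> 0))" for i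
      have F: "open (fst (F i)) \<and> p \<in> fst (F i) \<and> continuous_on Q (snd (F i)) \<and>
                 (\<forall>x\<in>Fm i. snd (F i) x < 0) \<and> (\<forall>x\<in>Fp i. snd (F i) x > 0) \<and>
                 (\<forall>x\<in>Q. f x \<in> fst (F i) \<longrightarrow> snd (F i) x \<noteq> 0)" if i: "i < n" for i
        unfolding F_def by (rule someI_ex[OF one[OF i]])
      define N where "N = (\<Inter>i\<in>{..<n}. fst (F i))"
      have "open N" unfolding N_def using F by (intro open_INT) auto
      moreover have "p \<in> N" unfolding N_def using F by auto
      moreover have "\<forall>i<n. \<exists>u::(nat\<Rightarrow>real)\<Rightarrow>real. continuous_on Q u \<and> (\<forall>x\<in>Fm i. u x < 0) \<and>
                 (\<forall>x\<in>Fp i. u x > 0) \<and> (\<forall>x\<in>Q. f x \<in> N \<longrightarrow> u x \<noteq> 0)"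
      proof (intro allI impI)
        fix i assume i: "i < n"
        show "\<exists>u::(nat\<Rightarrow>real)\<Rightarrow>real. continuous_on Q u \<and> (\<forall>x\<in>Fm i. u x < 0) \<and>
                 (\<forall>x\<in>Fp i. u x > 0) \<and> (\<forall>x\<in>Q. f x \<in> N \<longrightarrow> u x \<noteq> 0)"
        proof -
          have "\<forall>x\<in>Q. f x \<in> N \<longrightarrow> snd (F i) x \<noteq> 0" using F[OF i] i by (auto simp: N_def)
          with F[OF i] show ?thesis by blast
        qed
      qed
      ultimately show ?thesis by blast
    qed
    define N where "N p = (SOME N. open N \<and> p \<in> N \<and> (\<forall>i<n. \<exists>u::(nat\<Rightarrow>real)\<Rightarrow>real. continuous_on Q u \<and> (\<forall>x\<in>Fm i. u x < 0) \<and>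
                 (\<forall>x\<in>Fp i. u x > 0) \<and> (\<forall>x\<in>Q. f x \<in> N \<longrightarrow> u x \<noteq> 0)))" for p
    have N0: "open (N p) \<and> p \<in> N p \<and> (\<forall>i<n. \<exists>u::(nat\<Rightarrow>real)\<Rightarrow>real. continuous_on Q u \<and> (\<forall>x\<in>Fm i. u x < 0) \<and>
                 (\<forall>x\<in>Fp i. u x > 0) \<and> (\<forall>x\<in>Q. f x \<in> N p \<longrightarrow> u x \<noteq> 0))" for p
      unfolding N_def by (rule someI_ex[OF loc])
    have N: "\<And>p. open (N p)" "\<And>p. p \<in> N p" using N0 by auto
    define U where "U p i = (SOME u::(nat\<Rightarrow>real)\<Rightarrow>real. continuous_on Q u \<and> (\<forall>x\<in>Fm i. u x < 0) \<and>
                 (\<forall>x\<in>Fp i. u x > 0) \<and> (\<forall>x\<in>Q. f x \<in> N p \<longrightarrow> u x \<noteq> 0))" for p i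
    have U: "continuous_on Q (U p i) \<and> (\<forall>x\<in>Fm i. U p i x < 0) \<and>
                 (\<forall>x\<in>Fp i. U p i x > 0) \<and> (\<forall>x\<in>Q. f x \<in> N p \<longrightarrow> U p i x \<noteq> 0)" if i: "i<n" for p i
      unfolding U_def by (rule someI_ex[OF N0[of p, THEN conjunct2, THEN conjunct2, rule_format, OF i]])
    have cfQ: "compact (f ` Q)" by (rule compact_continuous_image[OF fQ cQ(1)])
    have subN: "f ` Q \<subseteq> \<Union>(range N)" using N(2) by blast
    have neN: "range N \<noteq> {}" by simp
    have opN: "\<And>B. B \<in> range N \<Longrightarrow> open B" using N(1) by blast
    obtain \<delta> where \<delta>: "0 < \<delta>" and leb: "\<And>T. T \<subseteq> f ` Q \<Longrightarrow> diameter T < \<delta> \<Longrightarrow> \<exists>B\<in>range N. T \<subseteq> B"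
      by (rule Lebesgue_number_lemma[OF cfQ neN subN]) (use opN that in blast)+
    define h where "h = \<delta> / 4"
    have h: "0 < h" using \<delta> by (simp add: h_def)
    have fcl: "continuous_on Q (\<lambda>x. f x l)" for l
      by (rule continuous_on_product_then_coordinatewise[OF fQ])
    have exR: "\<exists>R. \<forall>x\<in>Q. \<bar>f x l\<bar> \<le> R" for l
    proof -
      have "compact ((\<lambda>x. f x l) ` Q)" by (rule compact_continuous_image[OF fcl cQ(1)])
      then have "bounded ((\<lambda>x. f x l) ` Q)" by (rule compact_imp_bounded)
      then show ?thesis by (auto simp: bounded_real)
    qed
    define Rf where "Rf l = (SOME R. \<forall>x\<in>Q. \<bar>f x l\<bar> \<le> R)" for l
    have Rf: "\<forall>x\<in>Q. \<bar>f x l\<bar> \<le> Rf l" for l unfolding Rf_def by (rule someI_ex[OF exR])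
    define R where "R = (\<Sum>l<m. \<bar>Rf l\<bar>)"
    have Rb: "\<bar>f x l\<bar> \<le> R" if "x \<in> Q" "l < m" for x l
    proof -
      have "\<bar>f x l\<bar> \<le> \<bar>Rf l\<bar>" using Rf[of l] that by fastforce
      also have "\<bar>Rf l\<bar> \<le> R" unfolding R_def using that(2)
        by (intro member_le_sum) auto
      finally show ?thesis .
    qed
    define KK where "KK = \<lceil>R/h\<rceil> + 1"
    define Pidx where "Pidx s = {\<pi>::nat set \<times> (nat \<Rightarrow> int). fst \<pi> \<subseteq> {..<m} \<and> card (fst \<pi>) = s \<and> snd \<pi> \<in> PiE {..<m} (\<lambda>_. {-KK..KK})}" for s
    define \<rho> where "\<rho> s \<pi> y = (\<Prod>l<m. tent (eta n) (lo n s (fst \<pi>) (snd \<pi>) l) (hi n s (fst \<pi>) (snd \<pi>) l) (y l / h))" for s \<pi> y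
    define piece where "piece s \<pi> = {y. \<forall>l<m. lo n s (fst \<pi>) (snd \<pi>) l \<le> y l / h \<and> y l / h \<le> hi n s (fst \<pi>) (snd \<pi>) l}" for s \<pi>
    define pp where "pp s \<pi> = (SOME p. piece s \<pi> \<inter> f ` Q \<subseteq> N p)" for s \<pi>
    define \<phi> where "\<phi> x s = (\<Sum>\<pi>\<in>Pidx s. \<rho> s \<pi> (f x) * U (pp s \<pi>) s x) + (1 - (\<Sum>\<pi>\<in>Pidx s. \<rho> s \<pi> (f x))) * (x s - 1/2)" for x s
    have finP: "finite (Pidx s)" for s
      by (rule finite_subset[of _ "Pow {..<m} \<times> PiE {..<m} (\<lambda>_. {-KK..KK})"]) (auto simp: Pidx_def intro!: finite_PiE)
    have eta: "0 < eta n" using aa_facts(7)[OF n, of 0] n by simp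
    have tn: "0 \<le> tent (eta n) a b z" "tent (eta n) a b z \<le> 1" for a b z
      using tent_props[OF eta] by auto
    have \<rho>01: "0 \<le> \<rho> s \<pi> y" "\<rho> s \<pi> y \<le> 1" for s \<pi> y
      unfolding \<rho>_def using tn by (auto intro: prod_nonneg prod_le_1)
    have \<rho>pos: "lo n s (fst \<pi>) (snd \<pi>) l - eta n < y l / h \<and> y l / h < hi n s (fst \<pi>) (snd \<pi>) l + eta n"
      if "\<rho> s \<pi> y > 0" "l < m" for s \<pi> y l
    proof -
      have "tent (eta n) (lo n s (fst \<pi>) (snd \<pi>) l) (hi n s (fst \<pi>) (snd \<pi>) l) (y l / h) \<noteq> 0"
      proof
        assume "tent (eta n) (lo n s (fst \<pi>) (snd \<pi>) l) (hi n s (fst \<pi>) (snd \<pi>) l) (y l / h) = 0"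
        then have "\<rho> s \<pi> y = 0" unfolding \<rho>_def using that(2) by (intro prod_zero) auto
        then show False using that(1) by simp
      qed
      then have "tent (eta n) (lo n s (fst \<pi>) (snd \<pi>) l) (hi n s (fst \<pi>) (snd \<pi>) l) (y l / h) > 0"
        using tn by (simp add: less_le)
      then show ?thesis using tent_props(4)[OF eta] by blast
    qed
    have uniq: "\<pi> = \<pi>'" if "s < n" "\<pi> \<in> Pidx s" "\<pi>' \<in> Pidx s" "\<rho> s \<pi> y > 0" "\<rho> s \<pi>' y > 0" for s \<pi> \<pi>' y
    proof -
      have "fst \<pi> = fst \<pi>' \<and> snd \<pi> = snd \<pi>'"
      proof (rule col_unique[OF n that(1), where z = "\<lambda>l. y l / h"])
        show "fst \<pi> \<subseteq> {..<m}" "fst \<pi>' \<subseteq> {..<m}" "snd \<pi> \<in> PiE {..<m} (\<lambda>_. {-KK..KK})"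
          "snd \<pi>' \<in> PiE {..<m} (\<lambda>_. {-KK..KK})" using that(2,3) by (auto simp: Pidx_def)
        show "\<And>l. l < m \<Longrightarrow> lo n s (fst \<pi>) (snd \<pi>) l - eta n < y l / h \<and> y l / h < hi n s (fst \<pi>) (snd \<pi>) l + eta n"
          using \<rho>pos that(4) by blast
        show "\<And>l. l < m \<Longrightarrow> lo n s (fst \<pi>') (snd \<pi>') l - eta n < y l / h \<and> y l / h < hi n s (fst \<pi>') (snd \<pi>') l + eta n"
          using \<rho>pos that(5) by blast
      qed
      then show ?thesis by (simp add: prod_eq_iff)
    qed
    have piece1: "\<rho> s \<pi> y = 1" if "y \<in> piece s \<pi>" for s \<pi> y
      unfolding \<rho>_def using that tent_props(3)[OF eta] by (intro prod.neutral) (auto simp: piece_def)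
    have ppN: "piece s \<pi> \<inter> f ` Q \<subseteq> N (pp s \<pi>)" if sn: "s < n" for s \<pi>
    proof -
      define T where "T = piece s \<pi> \<inter> f ` Q"
      have dT: "dist y y' \<le> \<delta> / 2" if yT: "y \<in> T" "y' \<in> T" for y y'
      proof -
        have "\<bar>y i - y' i\<bar> \<le> h" for i
        proof (cases "i < m")
          case True
          have w: "hi n s (fst \<pi>) (snd \<pi>) i - lo n s (fst \<pi>) (snd \<pi>) i \<le> 1" by (rule width_le[OF n sn])
          have "lo n s (fst \<pi>) (snd \<pi>) i \<le> y i / h \<and> y i / h \<le> hi n s (fst \<pi>) (snd \<pi>) i"
               "lo n s (fst \<pi>) (snd \<pi>) i \<le> y' i / h \<and> y' i / h \<le> hi n s (fst \<pi>) (snd \<pi>) i"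
            using yT True by (auto simp: T_def piece_def)
          then have "\<bar>y i / h - y' i / h\<bar> \<le> 1" using w by linarith
          then have "\<bar>y i - y' i\<bar> / h \<le> 1" using h by (simp add: diff_divide_distrib[symmetric] abs_divide)
          then show ?thesis using h by (simp add: divide_le_eq)
        next
          case False
          obtain x x' where "x \<in> Q" "x' \<in> Q" "y = f x" "y' = f x'" using yT by (auto simp: T_def)
          then have "y i = 0" "y' i = 0" using fz False by auto
          then show ?thesis using h by simp
        qed
        then have "dist y y' \<le> 2 * h" by (rule dist_fun_le)
        then show ?thesis by (simp add: h_def)
      qed
      have "diameter T \<le> \<delta> / 2"
      proof (cases "T = {}")
        case True then show ?thesis using \<delta> by (simp add: diameter_def)
      next
        case False
        have "(SUP (x,y)\<in>T\<times>T. dist x y) \<le> \<delta> / 2"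
        proof (rule cSUP_least)
          show "T \<times> T \<noteq> {}" using False by simp
          fix q assume "q \<in> T \<times> T"
          then obtain a b where q: "q = (a,b)" "a \<in> T" "b \<in> T" by blast
          show "(case q of (x,y) \<Rightarrow> dist x y) \<le> \<delta> / 2" using dT[OF q(2,3)] by (simp add: q(1))
        qed
        then show ?thesis using False by (simp add: diameter_def)
      qed
      then have "diameter T < \<delta>" using \<delta> by linarith
      then obtain B where "B \<in> range N" "T \<subseteq> B" using leb[of T] by (auto simp: T_def)
      then have "\<exists>p. T \<subseteq> N p" by blast
      then show ?thesis unfolding pp_def T_def[symmetric] by (rule someI_ex)
    qed
    have fhc: "continuous_on Q (\<lambda>x. f x l / h)" for l
      using fcl[of l] h by (intro continuous_on_divide continuous_on_const) auto
    have \<rho>c: "continuous_on Q (\<lambda>x. \<rho> s \<pi> (f x))" for s \<pi>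
      unfolding \<rho>_def by (intro continuous_on_prod tent_cont[OF fhc eta])
    have \<phi>c: "continuous_on Q (\<lambda>x. \<phi> x s)" if "s < n" for s
      unfolding \<phi>_def using U[OF that]
      by (intro continuous_on_add continuous_on_mult continuous_on_sum continuous_on_diff
          continuous_on_const \<rho>c coord_cont) auto
    have sumle: "(\<Sum>\<pi>\<in>Pidx s. \<rho> s \<pi> y) \<le> 1" if "s < n" for s y
      by (rule sum_le_one_active[OF finP]) (use \<rho>01 uniq[OF that] in auto)
    have neg: "\<phi> x s < 0" if "s < n" "x \<in> unit_cube n" "x s = 0" for s x
    proof -
      have "x \<in> Fm s" using that by (simp add: Fm_def Q_def)
      then have "\<And>\<pi>. \<pi> \<in> Pidx s \<Longrightarrow> U (pp s \<pi>) s x < 0" using U[OF that(1)] by blast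
      then show ?thesis unfolding \<phi>_def
        by (intro comb_neg_sum finP \<rho>01 sumle[OF that(1)]) (use that in auto)
    qed
    have pos: "\<phi> x s > 0" if "s < n" "x \<in> unit_cube n" "x s = 1" for s x
    proof -
      have "x \<in> Fp s" using that by (simp add: Fp_def Q_def)
      then have "\<And>\<pi>. \<pi> \<in> Pidx s \<Longrightarrow> U (pp s \<pi>) s x > 0" using U[OF that(1)] by blast
      then show ?thesis unfolding \<phi>_def
        by (intro comb_pos_sum finP \<rho>01 sumle[OF that(1)]) (use that in auto)
    qed
    obtain x0 where x0: "x0 \<in> unit_cube n" "\<And>s. s < n \<Longrightarrow> \<phi> x0 s = 0"
      using miranda[of n \<phi>, OF n] \<phi>c neg pos unfolding Q_def by blast
    have x0Q: "x0 \<in> Q" using x0 by (simp add: Q_def)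
    obtain s L k where sn: "s < n" and L: "L \<subseteq> {..<m}" "card L = s" and k: "k \<in> PiE {..<m} (\<lambda>_. {-KK..KK})"
      and mem: "\<forall>l<m. lo n s L k l \<le> f x0 l / h \<and> f x0 l / h \<le> hi n s L k l"
      using col_cover[OF nm h _ KK_def, of "f x0"] Rb[OF x0Q] by blast
    define \<pi>0 where "\<pi>0 = (L, k)"
    have \<pi>0P: "\<pi>0 \<in> Pidx s" using L k by (simp add: Pidx_def \<pi>0_def)
    have pc: "f x0 \<in> piece s \<pi>0" using mem by (simp add: piece_def \<pi>0_def)
    have r1: "\<rho> s \<pi>0 (f x0) = 1" by (rule piece1[OF pc])
    have r0: "\<rho> s \<pi> (f x0) = 0" if "\<pi> \<in> Pidx s" "\<pi> \<noteq> \<pi>0" for \<pi>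
    proof (rule ccontr)
      assume "\<rho> s \<pi> (f x0) \<noteq> 0"
      then have "\<rho> s \<pi> (f x0) > 0" using \<rho>01[of s \<pi> "f x0"] by simp
      then have "\<pi> = \<pi>0" using uniq[OF sn that(1) \<pi>0P] r1 by simp
      then show False using that(2) by simp
    qed
    have "\<phi> x0 s = U (pp s \<pi>0) s x0"
      unfolding \<phi>_def using one_active[OF finP \<pi>0P, of "\<lambda>\<pi>. \<rho> s \<pi> (f x0)", OF r0] r1 by simp
    moreover have "f x0 \<in> N (pp s \<pi>0)" using ppN[OF sn] pc x0Q by blast
    then have "U (pp s \<pi>0) s x0 \<noteq> 0" using U[OF sn] x0Q by blast
    ultimately show False using x0(2)[OF sn] by simp
  qed
  then obtain p i where i: "i<n" and ns: "\<not> sep p i" by blast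
  obtain S where S: "S \<subseteq> K p" "compact S" "connected S" "S \<inter> Fm i \<noteq> {}" "S \<inter> Fp i \<noteq> {}"
    using extract_conn[OF cK cFm cFp, of p i i] ns unfolding sep_def by blast
  then obtain x0 where x0: "x0 \<in> S" by blast
  have Eeq: "Euclidean_space k = top_of_set (topspace (Euclidean_space k))" for k
    by (simp add: Euclidean_space_def euclidean_product_topology topspace_Euclidean_space)
  have SQ: "S \<subseteq> Q" using S(1) by (auto simp: K_def)
  have SE: "S \<subseteq> topspace (Euclidean_space n)" using SQ Qsub by blast
  show ?thesis
  proof (intro bexI exI conjI)
    show "S \<subseteq> unit_cube n \<inter> f -` {p}" using S(1) by (auto simp: K_def Q_def)
    show "compactin (Euclidean_space n) S"
      using S(2) SE by (subst Eeq) (simp add: compactin_subtopology compactin_euclidean_iff)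
    have "connectedin (Euclidean_space n) S"
      using S(3) SE by (subst Eeq) (simp add: connectedin_subtopology connectedin_iff_connected)
    moreover have "S \<inter> cube_face_minus n i \<noteq> {}" "S \<inter> cube_face_plus n i \<noteq> {}"
      using S(4,5) by (auto simp: cube_face_minus_def cube_face_plus_def Fm_def Fp_def Q_def)
    ultimately show "connects_opposite_faces n S"
      unfolding connects_opposite_faces_def using i by blast
    have "x0 \<in> K p" using x0 S(1) by blast
    then show "p \<in> topspace (Euclidean_space (n - 1))"
      using fT[of x0] by (auto simp: K_def m_def)
  qed
qed

end
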